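(* Let $\gamma$ be a conformal metric on $\mathbb C_\infty$ invariant under radial reflection, $\theta^*\gamma=\gamma$. Then for every $F\in\Upsilon_{0,B_0}$, $$\langle(\Theta F)\,F\rangle_\gamma\ge0.$$
   Context: Riemann sphere $\mathbb C_\infty$, radial reflection $\theta(z)=z/|z|^2=\bar z^{-1}$, $B_0=\{|z|<1\}$. Symbols: a symbol is a finite sequence $Z=[k_1,z_1,\dots,k_n,z_n]$ with $k_i\in\mathbb Z$, $z_i\in\mathbb C_\infty$; the product of symbols is concatenation. $\Upsilon$ is the free complex algebra generated by this monoid (finitely supported formal sums $F=\sum_ZF(Z)Z$); $\Upsilon_0$ consists of $F$ with $F(Z)=0$ whenever $Z$ has two coinciding points; $\Upsilon_A$ of $F$ with $F(Z)=0$ whenever $Z$ has a point outside $A$; $\Upsilon_{0,A}=\Upsilon_0\cap\Upsilon_A$. $\Theta[k_1,z_1,\dots,k_n,z_n]=[-k_1,\theta z_1,\dots,-k_n,\theta z_n]$, extended anti-linearly to $\Upsilon$. Expectations: for a conformal metric $\gamma=e^\sigma|dz|^2$ and $Z$ with distinct points all in $\mathbb C$, $\langle Z\rangle_\gamma=0$ if $\sum k_i\ne0$ and $\langle Z\rangle_\gamma=\exp(-\frac1{8\pi}\sum_ik_i^2\sigma(z_i))\prod_{i<j}|z_i-z_j|^{k_ik_j/2\pi}$ if $\sum k_i=0$ (this is the $\mu\to0$, then regularization-removed, limit of regularized exponentials $\prod[e^{ik_i\phi(z_i)}]_r$ of the Gaussian field with covariance $(-\Delta_\gamma+\mu)^{-1}$).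 If some point is $\infty$, set $\langle Z\rangle_\gamma=\langle[k_1,\beta^{-1}(z_1),\dots,k_n,\beta^{-1}(z_n)]\rangle_{\beta^*\gamma}$ for any Möbius map $\beta$ with all $\beta^{-1}(z_i)\in\mathbb C$ (independent of $\beta$). Extend linearly: $\langle F\rangle_\gamma=\sum_ZF(Z)\langle Z\rangle_\gamma$ for $F\in\Upsilon_0$. *)

theory Defs
  imports "HOL-Analysis.Analysis"
begin

text \<open>The Riemann sphere is modelled as complex option: Some z is z, None is infinity.\<close>
type_synonym rpt = "complex option"

text \<open>A symbol [k1,z1,...,kn,zn] is the list of pairs (k_i, z_i).\<close>
type_synonym symbol = "(int \<times> rpt) list"

text \<open>Elements of Upsilon: coefficient functions (finitely supported, see below).\<close>
type_synonym upsilon = "symbol \<Rightarrow> complex"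

definition theta :: "rpt \<Rightarrow> rpt" where
  "theta p = (case p of None \<Rightarrow> Some 0
              | Some z \<Rightarrow> (if z = 0 then None else Some (1 / cnj z)))"

definition B0 :: "rpt set" where
  "B0 = {Some z | z. cmod z < 1}"

definition Theta_sym :: "symbol \<Rightarrow> symbol" where
  "Theta_sym Z = map (\<lambda>(k, z). (- k, theta z)) Z"

text \<open>Anti-linear extension: since Theta_sym is an involution, the coefficient of
  W in Theta F is the conjugate of the coefficient of Theta_sym W in F.\<close>
definition Theta_up :: "upsilon \<Rightarrow> upsilon" where
  "Theta_up F = (\<lambda>W. cnj (F (Theta_sym W)))"

definition in_Upsilon :: "upsilon \<Rightarrow> bool" where
  "in_Upsilon F \<longleftrightarrow> finite {Z. F Z \<noteq> 0}"

definition in_Upsilon0 :: "upsilon \<Rightarrow> bool" where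
  "in_Upsilon0 F \<longleftrightarrow> in_Upsilon F \<and> (\<forall>Z. F Z \<noteq> 0 \<longrightarrow> distinct (map snd Z))"

definition in_UpsilonA :: "rpt set \<Rightarrow> upsilon \<Rightarrow> bool" where
  "in_UpsilonA A F \<longleftrightarrow> in_Upsilon F \<and> (\<forall>Z. F Z \<noteq> 0 \<longrightarrow> set (map snd Z) \<subseteq> A)"

definition ups_mult :: "upsilon \<Rightarrow> upsilon \<Rightarrow> upsilon" where
  "ups_mult F G = (\<lambda>W. \<Sum>(Z, Z') \<in> {(Z, Z'). Z @ Z' = W}. F Z * G Z')"

fun Ck_on :: "nat \<Rightarrow> complex set \<Rightarrow> (complex \<Rightarrow> real) \<Rightarrow> bool" where
  "Ck_on 0 S f = continuous_on S f"
| "Ck_on (Suc k) S f = (\<exists>fx fy.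
      (\<forall>z\<in>S. (f has_derivative (\<lambda>h. Re h * fx z + Im h * fy z)) (at z))
      \<and> Ck_on k S fx \<and> Ck_on k S fy)"

definition smooth_on :: "complex set \<Rightarrow> (complex \<Rightarrow> real) \<Rightarrow> bool" where
  "smooth_on S f \<longleftrightarrow> (\<forall>k. Ck_on k S f)"

text \<open>gamma = exp(sigma)|dz|^2 on C; it is a (smooth) conformal metric on the sphere
  iff sigma is smooth on C and, in the chart w = 1/z, the conformal factor
  sigma(1/w) - 4 ln|w| extends smoothly across w = 0.\<close>
definition conformal_metric :: "(complex \<Rightarrow> real) \<Rightarrow> bool" where
  "conformal_metric \<sigma> \<longleftrightarrow> smooth_on UNIV \<sigma> \<and>
     (\<exists>\<tau>. smooth_on UNIV \<tau> \<and> (\<forall>w. w \<noteq> 0 \<longrightarrow> \<tau> w = \<sigma> (1 / w) - 4 * ln (cmod w)))"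

text \<open>Value of the conformal factor at infinity in the chart w = 1/z.\<close>
definition sigma_inf :: "(complex \<Rightarrow> real) \<Rightarrow> real" where
  "sigma_inf \<sigma> = Lim (at 0) (\<lambda>w. \<sigma> (1 / w) - 4 * ln (cmod w))"

text \<open>Invariance under radial reflection theta^* gamma = gamma:
  (theta^* gamma)(z) = exp(sigma(1/conj z) - 4 ln|z|)|dz|^2 for z nonzero.\<close>
definition theta_invariant :: "(complex \<Rightarrow> real) \<Rightarrow> bool" where
  "theta_invariant \<sigma> \<longleftrightarrow> (\<forall>z. z \<noteq> 0 \<longrightarrow> \<sigma> (1 / cnj z) - 4 * ln (cmod z) = \<sigma> z)"

definition expect_fin :: "(complex \<Rightarrow> real) \<Rightarrow> int list \<Rightarrow> complex list \<Rightarrow> real" where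
  "expect_fin \<sigma> ks zs =
     (if sum_list ks \<noteq> 0 then 0
      else exp (- (1 / (8 * pi)) * (\<Sum>i<length ks. (real_of_int (ks ! i))\<^sup>2 * \<sigma> (zs ! i)))
         * (\<Prod>(i, j) \<in> {(i, j). i < j \<and> j < length ks}.
              (cmod (zs ! i - zs ! j)) powr (real_of_int (ks ! i * ks ! j) / (2 * pi))))"

text \<open>If a point is infinity we use the Moebius map beta(w) = a + 1/w with a not
  among the points: beta^-1(z) = 1/(z - a), beta^-1(infinity) = 0, and
  beta^* gamma = exp(sigma_beta)|dw|^2 with sigma_beta(w) = sigma(a + 1/w) - 4 ln|w|
  (w nonzero), sigma_beta(0) = sigma_inf sigma.\<close>
definition expect_sym :: "(complex \<Rightarrow> real) \<Rightarrow> symbol \<Rightarrow> real" where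
  "expect_sym \<sigma> Z =
     (let ks = map fst Z; ps = map snd Z in
      if None \<notin> set ps then expect_fin \<sigma> ks (map the ps)
      else (let a = (SOME a. Some a \<notin> set ps) in
            expect_fin (\<lambda>w. if w = 0 then sigma_inf \<sigma> else \<sigma> (a + 1 / w) - 4 * ln (cmod w))
              ks (map (\<lambda>p. case p of None \<Rightarrow> 0 | Some z \<Rightarrow> 1 / (z - a)) ps)))"

definition expect :: "(complex \<Rightarrow> real) \<Rightarrow> upsilon \<Rightarrow> complex" where
  "expect \<sigma> F = (\<Sum>Z \<in> {Z. F Z \<noteq> 0}. F Z * complex_of_real (expect_sym \<sigma> Z))"

end

theory Submission
  imports Defs
begin
definition nn :: "complex \<Rightarrow> bool" where "nn c \<longleftrightarrow> Im c = 0 \<and> 0 \<le> Re c"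

definition pd :: "'a set \<Rightarrow> ('a \<Rightarrow> 'a \<Rightarrow> complex) \<Rightarrow> bool" where
  "pd S K \<longleftrightarrow> (\<forall>d. nn (\<Sum>Y\<in>S. \<Sum>Z\<in>S. cnj (d Y) * d Z * K Y Z))"

inductive Rk :: "('a \<Rightarrow> 'a \<Rightarrow> complex) \<Rightarrow> bool" where
  Rk_zero: "Rk (\<lambda>Y Z. 0)"
| Rk_add: "Rk K \<Longrightarrow> Rk (\<lambda>Y Z. K Y Z + cnj (f Y) * f Z)"

lemma nn_add: "nn a \<Longrightarrow> nn b \<Longrightarrow> nn (a + b)" by (simp add: nn_def)

lemma Rk_pd: assumes "Rk K" shows "pd S K"
  using assms
proof induction
  case Rk_zero then show ?case by (simp add: pd_def nn_def)
next
  case (Rk_add K f)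
  show ?case unfolding pd_def
  proof
    fix d
    have e: "(\<Sum>Y\<in>S. \<Sum>Z\<in>S. cnj (d Y) * d Z * (K Y Z + cnj (f Y) * f Z)) =
      (\<Sum>Y\<in>S. \<Sum>Z\<in>S. cnj (d Y) * d Z * K Y Z) + cnj (\<Sum>Y\<in>S. d Y * f Y) * (\<Sum>Z\<in>S. d Z * f Z)"
    proof -
      have "(\<Sum>Y\<in>S. \<Sum>Z\<in>S. cnj (d Y) * d Z * (K Y Z + cnj (f Y) * f Z)) =
        (\<Sum>Y\<in>S. \<Sum>Z\<in>S. cnj (d Y) * d Z * K Y Z) + (\<Sum>Y\<in>S. \<Sum>Z\<in>S. cnj (d Y * f Y) * (d Z * f Z))"
        by (simp add: distrib_left sum.distrib mult.assoc mult.left_commute)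
      also have "(\<Sum>Y\<in>S. \<Sum>Z\<in>S. cnj (d Y * f Y) * (d Z * f Z)) = cnj (\<Sum>Y\<in>S. d Y * f Y) * (\<Sum>Z\<in>S. d Z * f Z)"
        by (simp only: sum_product cnj_sum)
      finally show ?thesis .
    qed
    have "nn (cnj (\<Sum>Y\<in>S. d Y * f Y) * (\<Sum>Z\<in>S. d Z * f Z))"
    proof -
      have "cnj (\<Sum>Y\<in>S. d Y * f Y) * (\<Sum>Z\<in>S. d Z * f Z) = of_real (norm (\<Sum>Z\<in>S. d Z * f Z) ^ 2)"
        by (simp only: complex_norm_square mult.commute)
      then show ?thesis unfolding nn_def by (simp only: Im_complex_of_real Re_complex_of_real) simp
    qed
    then show "nn (\<Sum>Y\<in>S. \<Sum>Z\<in>S. cnj (d Y) * d Z * (K Y Z + cnj (f Y) * f Z))"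
      using Rk_add.IH unfolding pd_def e by (blast intro: nn_add)
  qed
qed

lemma Rk_plus: assumes "Rk K'" "Rk K" shows "Rk (\<lambda>Y Z. K Y Z + K' Y Z)"
  using assms
proof induction
  case Rk_zero then show ?case by simp
next
  case (Rk_add K' f)
  then show ?case using Rk.Rk_add[of "\<lambda>Y Z. K Y Z + K' Y Z" f] by (simp add: add_ac)
qed

lemma Rk_mult1: assumes "Rk K" shows "Rk (\<lambda>Y Z. K Y Z * (cnj (f Y) * f Z))"
  using assms
proof induction
  case Rk_zero then show ?case by (simp add: Rk.Rk_zero)
next
  case (Rk_add K g)
  then show ?case using Rk.Rk_add[of "\<lambda>Y Z. K Y Z * (cnj (f Y) * f Z)" "\<lambda>Y. g Y * f Y"]
    by (simp add: algebra_simps)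
qed

lemma Rk_mult: assumes "Rk K'" "Rk K" shows "Rk (\<lambda>Y Z. K Y Z * K' Y Z)"
  using assms
proof induction
  case Rk_zero then show ?case by (simp add: Rk.Rk_zero)
next
  case (Rk_add K' f)
  then show ?case using Rk_plus[OF Rk_mult1[OF \<open>Rk K\<close>, of f]] by (simp add: algebra_simps)
qed

lemma Rk_rank1: "Rk (\<lambda>Y Z. cnj (f Y) * f Z)"
  using Rk_add[OF Rk_zero, of f] by simp

lemma Rk_scale: assumes "Rk K" "0 \<le> c" shows "Rk (\<lambda>Y Z. of_real c * K Y Z)"
  using assms
proof induction
  case Rk_zero then show ?case by (simp add: Rk.Rk_zero)
next
  case (Rk_add K f)
  have sc: "(of_real (sqrt c) :: complex) * of_real (sqrt c) = of_real c"
    using Rk_add.prems by (simp flip: of_real_mult)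
  have e: "cnj (of_real (sqrt c) * f Y) * (of_real (sqrt c) * f Z) = of_real c * (cnj (f Y) * f Z)" for Y Z
  proof -
    have "cnj (of_real (sqrt c) * f Y) * (of_real (sqrt c) * f Z) = (of_real (sqrt c) * of_real (sqrt c)) * (cnj (f Y) * f Z)"
      by (simp only: complex_cnj_mult complex_cnj_complex_of_real mult_ac)
    then show ?thesis by (simp only: sc)
  qed
  have "(\<lambda>Y Z. of_real c * (K Y Z + cnj (f Y) * f Z)) = (\<lambda>Y Z. of_real c * K Y Z + cnj (of_real (sqrt c) * f Y) * (of_real (sqrt c) * f Z))"
    by (simp only: e distrib_left)
  then show ?case using Rk.Rk_add[OF Rk_add.IH[OF Rk_add.prems], of "\<lambda>Y. of_real (sqrt c) * f Y"]
    by simp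
qed

lemma Rk_sum: assumes "finite I" "\<forall>i\<in>I. Rk (K i)" shows "Rk (\<lambda>Y Z. \<Sum>i\<in>I. K i Y Z)"
  using assms
proof (induction I rule: finite_induct)
  case empty then show ?case by (simp add: Rk_zero)
next
  case (insert i I)
  have "Rk (\<lambda>Y Z. \<Sum>i\<in>I. K i Y Z)" using insert by auto
  from Rk_plus[OF this, of "K i"] insert(4)
  have "Rk (\<lambda>Y Z. K i Y Z + (\<Sum>i\<in>I. K i Y Z))" by auto
  then show ?case using insert.hyps by simp
qed

lemma Rk_one: "Rk (\<lambda>Y Z. 1)" using Rk_rank1[of "\<lambda>_. 1"] by simp

lemma Rk_power: assumes "Rk K" shows "Rk (\<lambda>Y Z. K Y Z ^ m)"
proof (induction m)
  case 0 then show ?case using Rk_one by simp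
next
  case (Suc m) then show ?case using Rk_mult[OF assms Suc] by (simp add: mult.commute)
qed

lemma pd_limit:
  assumes "finite S" "\<And>n. pd S (K n)" "\<And>Y Z. Y \<in> S \<Longrightarrow> Z \<in> S \<Longrightarrow> (\<lambda>n. K n Y Z) \<longlonglongrightarrow> L Y Z"
  shows "pd S L"
  unfolding pd_def
proof
  fix d
  define q where "q = (\<lambda>n. \<Sum>Y\<in>S. \<Sum>Z\<in>S. cnj (d Y) * d Z * K n Y Z)"
  define l where "l = (\<Sum>Y\<in>S. \<Sum>Z\<in>S. cnj (d Y) * d Z * L Y Z)"
  have t: "q \<longlonglongrightarrow> l"
    unfolding q_def l_def
    by (rule tendsto_sum, rule tendsto_sum, rule tendsto_mult[OF tendsto_const], rule assms(3))
  have nq: "nn (q n)" for n using assms(2) unfolding pd_def q_def by blast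
  have t1: "(\<lambda>n. Im (q n)) \<longlonglongrightarrow> Im l" by (rule tendsto_Im[OF t])
  have "(\<lambda>n. Im (q n)) = (\<lambda>n. 0)" using nq by (simp add: nn_def)
  with t1 have t2: "(\<lambda>n. 0) \<longlonglongrightarrow> Im l" by simp
  have i: "Im l = 0" using LIMSEQ_unique[OF t2 tendsto_const] by simp
  have t3: "(\<lambda>n. Re (q n)) \<longlonglongrightarrow> Re l" by (rule tendsto_Re[OF t])
  have "0 \<le> Re l"
    by (rule LIMSEQ_le_const[OF t3]) (use nq in \<open>auto simp: nn_def\<close>)
  with i show "nn l" by (simp add: nn_def)
qed

definition Vs :: "(complex \<Rightarrow> real) \<Rightarrow> (int \<times> complex) set \<Rightarrow> real" where
  "Vs \<sigma> A = (\<Sum>x\<in>A. (real_of_int (fst x))\<^sup>2 * \<sigma> (snd x))"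

definition Ds :: "(int \<times> complex) set \<Rightarrow> (int \<times> complex) set \<Rightarrow> real" where
  "Ds A B = (\<Sum>x\<in>A. \<Sum>y\<in>B. real_of_int (fst x * fst y) * ln (cmod (snd x - snd y)))"

definition ELs :: "(complex \<Rightarrow> real) \<Rightarrow> (int \<times> complex) set \<Rightarrow> real" where
  "ELs \<sigma> A = - (1 / (8 * pi)) * Vs \<sigma> A + (1 / (4 * pi)) * Ds A A"

lemma sum_nth_set:
  assumes "distinct L" shows "(\<Sum>i<length L. g (L ! i)) = (\<Sum>x\<in>set L. g x)"
proof -
  have "(\<Sum>x\<in>set L. g x) = sum_list (map g L)" using assms by (rule sum.distinct_set_conv_list)
  also have "\<dots> = (\<Sum>i = 0..<length (map g L). map g L ! i)" by (rule sum_list_sum_nth)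
  also have "\<dots> = (\<Sum>i<length L. g (L ! i))" by (simp add: atLeast0LessThan)
  finally show ?thesis by simp
qed

definition Pn :: "nat \<Rightarrow> (nat \<times> nat) set" where "Pn n = {(i, j). i < j \<and> j < n}"

lemma Pn_Suc: "Pn (Suc n) = Pn n \<union> (\<lambda>i. (i, n)) ` {..<n}"
  by (auto simp: Pn_def less_Suc_eq)

lemma finite_Pn: "finite (Pn n)"
  by (rule finite_subset[of _ "{..<n} \<times> {..<n}"]) (auto simp: Pn_def)

lemma sym_half:
  fixes h :: "nat \<Rightarrow> nat \<Rightarrow> real"
  assumes "\<And>i j. h i j = h j i" "\<And>i. h i i = 0"
  shows "(\<Sum>i<n. \<Sum>j<n. h i j) = 2 * (\<Sum>(i, j)\<in>Pn n. h i j)"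
proof (induction n)
  case 0 then show ?case by (simp add: Pn_def)
next
  case (Suc n)
  have d: "Pn n \<inter> (\<lambda>i. (i, n)) ` {..<n} = {}" by (auto simp: Pn_def)
  have "(\<Sum>(i, j)\<in>Pn (Suc n). h i j) = (\<Sum>(i, j)\<in>Pn n. h i j) + (\<Sum>(i, j)\<in>(\<lambda>i. (i, n)) ` {..<n}. h i j)"
    unfolding Pn_Suc by (rule sum.union_disjoint) (use finite_Pn d in auto)
  also have "(\<Sum>(i, j)\<in>(\<lambda>i. (i, n)) ` {..<n}. h i j) = (\<Sum>i<n. h i n)"
    by (subst sum.reindex) (auto simp: inj_on_def)
  finally have e: "(\<Sum>(i, j)\<in>Pn (Suc n). h i j) = (\<Sum>(i, j)\<in>Pn n. h i j) + (\<Sum>i<n. h i n)" .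
  have "(\<Sum>i<Suc n. \<Sum>j<Suc n. h i j) = (\<Sum>i<n. \<Sum>j<n. h i j) + (\<Sum>i<n. h i n) + (\<Sum>j<n. h n j) + h n n"
    by (simp add: sum.distrib)
  also have "(\<Sum>j<n. h n j) = (\<Sum>i<n. h i n)" using assms(1) by simp
  finally show ?case using Suc.IH e assms(2) by simp
qed

lemma EF:
  fixes L :: "(int \<times> complex) list"
  assumes dist: "distinct (map snd L)" and neu: "sum_list (map fst L) = 0"
  shows "expect_fin \<sigma> (map fst L) (map snd L) = exp (ELs \<sigma> (set L))"
proof -
  define n where "n = length L"
  have dL: "distinct L" using dist by (simp add: distinct_map)
  have a: "(\<Sum>i<length (map fst L). (real_of_int (map fst L ! i))\<^sup>2 * \<sigma> (map snd L ! i)) = Vs \<sigma> (set L)"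
    unfolding Vs_def using sum_nth_set[OF dL, of "\<lambda>x. (real_of_int (fst x))\<^sup>2 * \<sigma> (snd x)"] by simp
  define h where "h i j = real_of_int (fst (L ! i) * fst (L ! j)) / (2 * pi) * ln (cmod (snd (L ! i) - snd (L ! j)))" for i j
  have ne: "snd (L ! i) \<noteq> snd (L ! j)" if "(i, j) \<in> Pn n" for i j
  proof -
    have "i < n" "j < n" "i \<noteq> j" using that by (auto simp: Pn_def)
    then show ?thesis using dist nth_eq_iff_index_eq[OF dist, of i j] by (simp add: n_def)
  qed
  have b: "(\<Prod>(i, j) \<in> {(i, j). i < j \<and> j < length (map fst L)}.
              (cmod (map snd L ! i - map snd L ! j)) powr (real_of_int (map fst L ! i * map fst L ! j) / (2 * pi)))
        = exp (\<Sum>(i, j)\<in>Pn n. h i j)"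
  proof -
    have "(\<Prod>(i, j) \<in> {(i, j). i < j \<and> j < length (map fst L)}.
              (cmod (map snd L ! i - map snd L ! j)) powr (real_of_int (map fst L ! i * map fst L ! j) / (2 * pi)))
          = (\<Prod>(i, j) \<in> Pn n. exp (h i j))"
    proof (rule prod.cong)
      show "{(i, j). i < j \<and> j < length (map fst L)} = Pn n" by (simp add: Pn_def n_def)
    next
      fix x assume x: "x \<in> Pn n"
      obtain i j where ij: "x = (i, j)" by (cases x)
      with x have "i < n" "j < n" by (auto simp: Pn_def)
      moreover have "cmod (snd (L ! i) - snd (L ! j)) \<noteq> 0" using ne x ij by auto
      ultimately show "(case x of (i, j) \<Rightarrow> (cmod (map snd L ! i - map snd L ! j)) powr (real_of_int (map fst L ! i * map fst L ! j) / (2 * pi)))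
           = (case x of (i, j) \<Rightarrow> exp (h i j))"
        by (simp add: ij powr_def h_def n_def mult.commute)
    qed
    also have "\<dots> = exp (\<Sum>(i, j)\<in>Pn n. h i j)"
      by (simp add: exp_sum finite_Pn case_prod_unfold)
    finally show ?thesis .
  qed
  have c: "(\<Sum>(i, j)\<in>Pn n. h i j) = (1 / (4 * pi)) * Ds (set L) (set L)"
  proof -
    have "(\<Sum>i<n. \<Sum>j<n. h i j) = 2 * (\<Sum>(i, j)\<in>Pn n. h i j)"
      by (rule sym_half) (simp_all add: h_def mult.commute norm_minus_commute)
    moreover have "(\<Sum>i<n. \<Sum>j<n. h i j) = (1 / (2 * pi)) * Ds (set L) (set L)"
    proof -
      have "(\<Sum>i<n. \<Sum>j<n. h i j) = (\<Sum>i<n. \<Sum>y\<in>set L. real_of_int (fst (L ! i) * fst y) / (2 * pi) * ln (cmod (snd (L ! i) - snd y)))"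
        unfolding h_def n_def by (intro sum.cong refl sum_nth_set[OF dL])
      also have "\<dots> = (\<Sum>x\<in>set L. \<Sum>y\<in>set L. real_of_int (fst x * fst y) / (2 * pi) * ln (cmod (snd x - snd y)))"
        unfolding n_def by (rule sum_nth_set[OF dL])
      also have "\<dots> = (1 / (2 * pi)) * Ds (set L) (set L)"
        unfolding Ds_def by (simp add: sum_distrib_left)
      finally show ?thesis .
    qed
    ultimately show ?thesis by simp
  qed
  show ?thesis
    unfolding expect_fin_def ELs_def using neu a b c
    by (simp add: exp_add[symmetric] mult.commute)
qed


definition Kc :: "(int \<times> complex) set \<Rightarrow> int" where "Kc A = (\<Sum>x\<in>A. fst x)"

lemma Vs_union: "finite A \<Longrightarrow> finite B \<Longrightarrow> A \<inter> B = {} \<Longrightarrow> Vs \<sigma> (A \<union> B) = Vs \<sigma> A + Vs \<sigma> B"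
  unfolding Vs_def by (rule sum.union_disjoint)

lemma Ds_union1: "finite A \<Longrightarrow> finite B \<Longrightarrow> A \<inter> B = {} \<Longrightarrow> Ds (A \<union> B) C = Ds A C + Ds B C"
  unfolding Ds_def by (rule sum.union_disjoint)

lemma Ds_sym: "Ds A B = Ds B A"
  unfolding Ds_def by (subst sum.swap) (simp add: mult.commute norm_minus_commute)

lemma Ds_union2: "finite A \<Longrightarrow> finite B \<Longrightarrow> A \<inter> B = {} \<Longrightarrow> Ds C (A \<union> B) = Ds C A + Ds C B"
  using Ds_union1 Ds_sym by metis

lemma ELs_union:
  assumes "finite A" "finite B" "A \<inter> B = {}"
  shows "ELs \<sigma> (A \<union> B) = ELs \<sigma> A + ELs \<sigma> B + (1 / (2 * pi)) * Ds A B"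
proof -
  have "Ds (A \<union> B) (A \<union> B) = Ds A A + Ds B B + 2 * Ds A B"
    using Ds_union1[OF assms] Ds_union2[OF assms] Ds_sym[of B A] by simp
  then show ?thesis unfolding ELs_def using Vs_union[OF assms] by (simp add: algebra_simps add_divide_distrib)
qed

lemma ELs_neg:
  assumes "finite A"
  shows "ELs \<sigma> ((\<lambda>(k, z). (- k, z)) ` A) = ELs \<sigma> A"
proof -
  have inj: "inj_on (\<lambda>(k, z). (- k, z)) A" by (auto simp: inj_on_def)
  have "Vs \<sigma> ((\<lambda>(k, z). (- k, z)) ` A) = Vs \<sigma> A"
    unfolding Vs_def by (subst sum.reindex[OF inj]) (simp add: case_prod_unfold)
  moreover have "Ds ((\<lambda>(k, z). (- k, z)) ` A) ((\<lambda>(k, z). (- k, z)) ` A) = Ds A A"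
    unfolding Ds_def by (subst sum.reindex[OF inj], subst sum.reindex[OF inj]) (simp add: case_prod_unfold)
  ultimately show ?thesis unfolding ELs_def by simp
qed

lemma gauge:
  fixes g :: "complex \<Rightarrow> complex" and \<alpha> :: "complex \<Rightarrow> real"
  assumes fin: "finite A" and injs: "inj_on snd A" and injg: "inj_on g (snd ` A)"
    and hs: "\<And>x. x \<in> A \<Longrightarrow> \<sigma>' (g (snd x)) = \<sigma> (snd x) - 4 * \<alpha> (snd x)"
    and hd: "\<And>x y. x \<in> A \<Longrightarrow> y \<in> A \<Longrightarrow> snd x \<noteq> snd y \<Longrightarrow>
       ln (cmod (g (snd x) - g (snd y))) = ln (cmod (snd x - snd y)) + \<alpha> (snd x) + \<alpha> (snd y)"
  shows "ELs \<sigma>' ((\<lambda>(k, z). (k, g z)) ` A) = ELs \<sigma> A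
     + (1 / (2 * pi)) * real_of_int (Kc A) * (\<Sum>x\<in>A. real_of_int (fst x) * \<alpha> (snd x))"
proof -
  let ?m = "\<lambda>(k, z). (k, g z)"
  have inj: "inj_on ?m A"
  proof (rule inj_onI)
    fix x y assume "x \<in> A" "y \<in> A" "?m x = ?m y"
    then have "fst x = fst y" "g (snd x) = g (snd y)" by (auto simp: case_prod_unfold)
    then have "snd x = snd y" using injg \<open>x \<in> A\<close> \<open>y \<in> A\<close> by (auto simp: inj_on_def)
    then show "x = y" using \<open>fst x = fst y\<close> by (simp add: prod_eq_iff)
  qed
  define Sa where "Sa = (\<Sum>x\<in>A. real_of_int (fst x) * \<alpha> (snd x))"
  define Q where "Q = (\<Sum>x\<in>A. (real_of_int (fst x))\<^sup>2 * \<alpha> (snd x))"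
  have v: "Vs \<sigma>' (?m ` A) = Vs \<sigma> A - 4 * Q"
  proof -
    have "Vs \<sigma>' (?m ` A) = (\<Sum>x\<in>A. (real_of_int (fst x))\<^sup>2 * \<sigma>' (g (snd x)))"
      unfolding Vs_def by (subst sum.reindex[OF inj]) (simp add: case_prod_unfold)
    also have "\<dots> = (\<Sum>x\<in>A. (real_of_int (fst x))\<^sup>2 * \<sigma> (snd x) - 4 * ((real_of_int (fst x))\<^sup>2 * \<alpha> (snd x)))"
      by (rule sum.cong) (simp_all add: hs algebra_simps)
    finally show ?thesis unfolding Vs_def Q_def by (simp add: sum_subtractf sum_distrib_left)
  qed
  have trm: "real_of_int (fst x * fst y) * ln (cmod (g (snd x) - g (snd y)))
      = real_of_int (fst x * fst y) * ln (cmod (snd x - snd y))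
        + real_of_int (fst x * fst y) * \<alpha> (snd x) + real_of_int (fst x) * (real_of_int (fst y) * \<alpha> (snd y))
        - (if y = x then 2 * ((real_of_int (fst x))\<^sup>2 * \<alpha> (snd x)) else 0)"
    if "x \<in> A" "y \<in> A" for x y
  proof (cases "y = x")
    case True then show ?thesis by (simp add: power2_eq_square algebra_simps)
  next
    case False
    then have "snd x \<noteq> snd y" using injs that by (auto simp: inj_on_def)
    then show ?thesis using hd[OF that] False by (simp add: algebra_simps)
  qed
  have d: "Ds (?m ` A) (?m ` A) = Ds A A + 2 * real_of_int (Kc A) * Sa - 2 * Q"
  proof -
    have "Ds (?m ` A) (?m ` A) = (\<Sum>x\<in>A. \<Sum>y\<in>A. real_of_int (fst x * fst y) * ln (cmod (g (snd x) - g (snd y))))"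
      unfolding Ds_def by (subst sum.reindex[OF inj], subst sum.reindex[OF inj]) (simp add: case_prod_unfold)
    also have "\<dots> = (\<Sum>x\<in>A. \<Sum>y\<in>A. real_of_int (fst x * fst y) * ln (cmod (snd x - snd y))
        + real_of_int (fst x * fst y) * \<alpha> (snd x) + real_of_int (fst x) * (real_of_int (fst y) * \<alpha> (snd y))
        - (if y = x then 2 * ((real_of_int (fst x))\<^sup>2 * \<alpha> (snd x)) else 0))"
      by (intro sum.cong refl trm)
    also have "\<dots> = Ds A A + (\<Sum>x\<in>A. \<Sum>y\<in>A. real_of_int (fst x * fst y) * \<alpha> (snd x))
        + (\<Sum>x\<in>A. \<Sum>y\<in>A. real_of_int (fst x) * (real_of_int (fst y) * \<alpha> (snd y)))
        - (\<Sum>x\<in>A. \<Sum>y\<in>A. (if y = x then 2 * ((real_of_int (fst x))\<^sup>2 * \<alpha> (snd x)) else 0))"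
      unfolding Ds_def by (simp add: sum.distrib sum_subtractf)
    also have "(\<Sum>x\<in>A. \<Sum>y\<in>A. real_of_int (fst x * fst y) * \<alpha> (snd x)) = real_of_int (Kc A) * Sa"
      unfolding Kc_def Sa_def by (simp add: sum_distrib_left sum_distrib_right mult_ac)
    also have "(\<Sum>x\<in>A. \<Sum>y\<in>A. real_of_int (fst x) * (real_of_int (fst y) * \<alpha> (snd y))) = real_of_int (Kc A) * Sa"
      unfolding Kc_def Sa_def by (subst sum.swap) (simp add: sum_distrib_left sum_distrib_right mult_ac)
    also have "(\<Sum>x\<in>A. \<Sum>y\<in>A. (if y = x then 2 * ((real_of_int (fst x))\<^sup>2 * \<alpha> (snd x)) else 0)) = 2 * Q"
      unfolding Q_def using fin by (simp add: sum_distrib_left)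
    finally show ?thesis by simp
  qed
  show ?thesis unfolding ELs_def v d Sa_def[symmetric] by (simp add: algebra_simps)
qed

definition Xk :: "(int \<times> complex) set \<Rightarrow> (int \<times> complex) set \<Rightarrow> real" where
  "Xk A B = - (1 / (2 * pi)) * (\<Sum>x\<in>A. \<Sum>y\<in>B. real_of_int (fst x * fst y) * ln (cmod (1 - cnj (snd x) * snd y)))"

lemma theta_inv_eq: "theta_invariant \<sigma> \<Longrightarrow> z \<noteq> 0 \<Longrightarrow> \<sigma> (1 / cnj z) = \<sigma> z + 4 * ln (cmod z)"
  unfolding theta_invariant_def by (drule spec[of _ z]) simp

lemma ln_inv_diff:
  fixes x y :: complex
  assumes "x \<noteq> 0" "y \<noteq> 0" "x \<noteq> y"
  shows "ln (cmod (1 / cnj x - 1 / cnj y)) = ln (cmod (x - y)) + - ln (cmod x) + - ln (cmod y)"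
proof -
  have "1 / cnj x - 1 / cnj y = cnj (y - x) / (cnj x * cnj y)" using assms by (simp add: field_simps)
  then have "cmod (1 / cnj x - 1 / cnj y) = cmod (x - y) / (cmod x * cmod y)"
  proof -
    have "cmod (cnj (y - x)) = cmod (x - y)" by (simp only: complex_mod_cnj norm_minus_commute)
    then show ?thesis using \<open>1 / cnj x - 1 / cnj y = cnj (y - x) / (cnj x * cnj y)\<close>
      by (simp add: norm_divide norm_mult)
  qed
  then show ?thesis using assms by (simp add: ln_div ln_mult)
qed

lemma ln_inv_w:
  fixes z w :: complex
  assumes "z \<noteq> 0" "cmod z < 1" "cmod w < 1"
  shows "ln (cmod (1 / cnj z - w)) = ln (cmod (1 - cnj z * w)) - ln (cmod z)"
proof -
  have nz: "1 - cnj z * w \<noteq> 0"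
  proof
    assume "1 - cnj z * w = 0"
    then have "cmod (cnj z * w) = 1" by (metis eq_iff_diff_eq_0 norm_one)
    moreover have "cmod (cnj z * w) < 1"
    proof -
      have "cmod z * cmod w \<le> cmod z" by (rule mult_left_le) (use assms in auto)
      then show ?thesis using assms unfolding norm_mult complex_mod_cnj by linarith
    qed
    ultimately show False by simp
  qed
  have "1 / cnj z - w = (1 - cnj z * w) / cnj z" using assms by (simp add: field_simps)
  then have "cmod (1 / cnj z - w) = cmod (1 - cnj z * w) / cmod z" by (simp add: norm_divide)
  then show ?thesis using assms nz by (simp add: ln_div)
qed

lemma cross:
  fixes Y1 C :: "(int \<times> complex) set"
  assumes ti: "theta_invariant \<sigma>" and fY: "finite Y1" and iY: "inj_on snd Y1"
    and Yb: "\<And>x. x \<in> Y1 \<Longrightarrow> snd x \<noteq> 0 \<and> cmod (snd x) < 1"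
    and fC: "finite C" and Cb: "\<And>x. x \<in> C \<Longrightarrow> cmod (snd x) < 1"
  shows "ELs \<sigma> ((\<lambda>(k, z). (- k, 1 / cnj z)) ` Y1 \<union> C) = ELs \<sigma> Y1 + ELs \<sigma> C + Xk Y1 C
     + (1 / (2 * pi)) * real_of_int (Kc C - Kc Y1) * (\<Sum>x\<in>Y1. real_of_int (fst x) * ln (cmod (snd x)))"
proof -
  let ?n = "\<lambda>(k, z). (- k, 1 / cnj z)"
  let ?m = "\<lambda>(k, z). (k, 1 / cnj z)"
  let ?g = "\<lambda>(k, z). (- k, z)"
  define Sl where "Sl = (\<Sum>x\<in>Y1. real_of_int (fst x) * ln (cmod (snd x)))"
  have nm: "?n ` Y1 = ?g ` (?m ` Y1)" by (auto simp: image_image case_prod_unfold)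
  have injn: "inj_on ?n Y1"
  proof (rule inj_onI)
    fix x y assume "x \<in> Y1" "y \<in> Y1" "?n x = ?n y"
    then show "x = y" by (auto simp: case_prod_unfold prod_eq_iff)
  qed
  have disj: "?n ` Y1 \<inter> C = {}"
  proof -
    { fix x assume "x \<in> Y1" "?n x \<in> C"
      then have "cmod (1 / cnj (snd x)) < 1" using Cb by (auto simp: case_prod_unfold)
      moreover have "cmod (1 / cnj (snd x)) > 1" using Yb[OF \<open>x \<in> Y1\<close>]
        by (simp add: norm_divide)
      ultimately have False by simp }
    then show ?thesis by blast
  qed
  have e1: "ELs \<sigma> (?n ` Y1 \<union> C) = ELs \<sigma> (?n ` Y1) + ELs \<sigma> C + (1 / (2 * pi)) * Ds (?n ` Y1) C"
    by (rule ELs_union) (use fY fC disj in auto)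
  have e2: "ELs \<sigma> (?n ` Y1) = ELs \<sigma> Y1 + (1 / (2 * pi)) * real_of_int (Kc Y1) * (\<Sum>x\<in>Y1. real_of_int (fst x) * - ln (cmod (snd x)))"
  proof -
    have "ELs \<sigma> (?n ` Y1) = ELs \<sigma> (?m ` Y1)" unfolding nm by (rule ELs_neg) (use fY in auto)
    also have "\<dots> = ELs \<sigma> Y1 + (1 / (2 * pi)) * real_of_int (Kc Y1) * (\<Sum>x\<in>Y1. real_of_int (fst x) * - ln (cmod (snd x)))"
    proof (rule gauge[where g = "\<lambda>z. 1 / cnj z" and \<alpha> = "\<lambda>z. - ln (cmod z)"])
      show "inj_on (\<lambda>z. 1 / cnj z) (snd ` Y1)" by (auto simp: inj_on_def)
      show "\<sigma> (1 / cnj (snd x)) = \<sigma> (snd x) - 4 * - ln (cmod (snd x))" if "x \<in> Y1" for x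
        using theta_inv_eq[OF ti] Yb[OF that] by simp
      show "ln (cmod (1 / cnj (snd x) - 1 / cnj (snd y))) = ln (cmod (snd x - snd y)) + - ln (cmod (snd x)) + - ln (cmod (snd y))"
        if "x \<in> Y1" "y \<in> Y1" "snd x \<noteq> snd y" for x y
        using ln_inv_diff Yb[OF that(1)] Yb[OF that(2)] that(3) by blast
    qed (use fY iY in auto)
    finally show ?thesis .
  qed
  have e3: "Ds (?n ` Y1) C = - (\<Sum>x\<in>Y1. \<Sum>y\<in>C. real_of_int (fst x * fst y) * ln (cmod (1 - cnj (snd x) * snd y)))
       + real_of_int (Kc C) * Sl"
  proof -
    have "Ds (?n ` Y1) C = (\<Sum>x\<in>Y1. \<Sum>y\<in>C. real_of_int (- fst x * fst y) * ln (cmod (1 / cnj (snd x) - snd y)))"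
      unfolding Ds_def by (subst sum.reindex[OF injn]) (simp add: case_prod_unfold)
    also have "\<dots> = (\<Sum>x\<in>Y1. \<Sum>y\<in>C. - (real_of_int (fst x * fst y) * ln (cmod (1 - cnj (snd x) * snd y)))
        + real_of_int (fst y) * (real_of_int (fst x) * ln (cmod (snd x))))"
    proof (intro sum.cong refl)
      fix x y assume "x \<in> Y1" "y \<in> C"
      then have h: "ln (cmod (1 / cnj (snd x) - snd y)) = ln (cmod (1 - cnj (snd x) * snd y)) - ln (cmod (snd x))"
        using ln_inv_w[of "snd x" "snd y"] Yb Cb by blast
      show "real_of_int (- fst x * fst y) * ln (cmod (1 / cnj (snd x) - snd y)) =
        - (real_of_int (fst x * fst y) * ln (cmod (1 - cnj (snd x) * snd y))) + real_of_int (fst y) * (real_of_int (fst x) * ln (cmod (snd x)))"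
        unfolding h by (simp add: algebra_simps)
    qed
    also have "\<dots> = - (\<Sum>x\<in>Y1. \<Sum>y\<in>C. real_of_int (fst x * fst y) * ln (cmod (1 - cnj (snd x) * snd y)))
       + real_of_int (Kc C) * Sl"
      unfolding Sl_def Kc_def by (simp add: sum.distrib sum_negf sum_subtractf sum_distrib_left sum_distrib_right mult_ac)
    finally show ?thesis .
  qed
  have e4: "(\<Sum>x\<in>Y1. real_of_int (fst x) * - ln (cmod (snd x))) = - Sl" by (simp add: Sl_def sum_negf)
  show ?thesis unfolding e1 e2 e3 e4 Xk_def Sl_def[symmetric]
    by (simp add: algebra_simps add_divide_distrib diff_divide_distrib)
qed


lemma ln_mob_diff:
  fixes x y a :: complex
  assumes "x \<noteq> a" "y \<noteq> a" "x \<noteq> y"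
  shows "ln (cmod (1 / (x - a) - 1 / (y - a))) = ln (cmod (x - y)) + - ln (cmod (x - a)) + - ln (cmod (y - a))"
proof -
  have "1 / (x - a) - 1 / (y - a) = (y - x) / ((x - a) * (y - a))" using assms by (simp add: field_simps)
  then have "cmod (1 / (x - a) - 1 / (y - a)) = cmod (x - y) / (cmod (x - a) * cmod (y - a))"
    by (simp add: norm_divide norm_mult norm_minus_commute)
  then show ?thesis using assms by (simp add: ln_div ln_mult)
qed

lemma chart:
  fixes Wc :: "(int \<times> complex) set" and a :: complex
  assumes fW: "finite Wc" and iW: "inj_on snd Wc" and na: "\<And>x. x \<in> Wc \<Longrightarrow> snd x \<noteq> a"
    and K: "Kc Wc = k0"
  shows "ELs (\<lambda>w. if w = 0 then sigma_inf \<sigma> else \<sigma> (a + 1 / w) - 4 * ln (cmod w))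
      ((\<lambda>(k, z). (k, 1 / (z - a))) ` Wc \<union> {(- k0, 0)})
     = ELs \<sigma> Wc - (1 / (8 * pi)) * (real_of_int k0)\<^sup>2 * sigma_inf \<sigma>"
proof -
  define sb where "sb = (\<lambda>w. if w = 0 then sigma_inf \<sigma> else \<sigma> (a + 1 / w) - 4 * ln (cmod w))"
  let ?m = "\<lambda>(k, z). (k, 1 / (z - a))"
  have injm: "inj_on ?m Wc"
  proof (rule inj_onI)
    fix x y assume "x \<in> Wc" "y \<in> Wc" "?m x = ?m y"
    then show "x = y" using na[OF \<open>x \<in> Wc\<close>] na[OF \<open>y \<in> Wc\<close>] by (auto simp: case_prod_unfold prod_eq_iff)
  qed
  have disj: "?m ` Wc \<inter> {(- k0, 0)} = {}" using na by (force simp: case_prod_unfold)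
  have e1: "ELs sb (?m ` Wc \<union> {(- k0, 0)}) = ELs sb (?m ` Wc) + ELs sb {(- k0, 0)} + (1 / (2 * pi)) * Ds (?m ` Wc) {(- k0, 0)}"
    by (rule ELs_union) (use fW disj in auto)
  have e2: "ELs sb (?m ` Wc) = ELs \<sigma> Wc + (1 / (2 * pi)) * real_of_int (Kc Wc) * (\<Sum>x\<in>Wc. real_of_int (fst x) * - ln (cmod (snd x - a)))"
  proof (rule gauge[where g = "\<lambda>z. 1 / (z - a)" and \<alpha> = "\<lambda>z. - ln (cmod (z - a))"])
    show "inj_on (\<lambda>z. 1 / (z - a)) (snd ` Wc)" using na by (auto simp: inj_on_def)
    show "sb (1 / (snd x - a)) = \<sigma> (snd x) - 4 * - ln (cmod (snd x - a))" if "x \<in> Wc" for x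
      using na[OF that] by (simp add: sb_def norm_divide ln_div)
    show "ln (cmod (1 / (snd x - a) - 1 / (snd y - a))) = ln (cmod (snd x - snd y)) + - ln (cmod (snd x - a)) + - ln (cmod (snd y - a))"
      if "x \<in> Wc" "y \<in> Wc" "snd x \<noteq> snd y" for x y
      using ln_mob_diff na[OF that(1)] na[OF that(2)] that(3) by blast
  qed (use fW iW in auto)
  have e3: "ELs sb {(- k0, 0)} = - (1 / (8 * pi)) * (real_of_int k0)\<^sup>2 * sigma_inf \<sigma>"
    unfolding ELs_def Vs_def Ds_def by (simp add: sb_def)
  have e4: "Ds (?m ` Wc) {(- k0, 0)} = real_of_int k0 * (\<Sum>x\<in>Wc. real_of_int (fst x) * ln (cmod (snd x - a)))"
  proof -
    have "Ds (?m ` Wc) {(- k0, 0)} = (\<Sum>x\<in>Wc. real_of_int (fst x * - k0) * ln (cmod (1 / (snd x - a))))"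
      unfolding Ds_def by (subst sum.reindex[OF injm]) (simp add: case_prod_unfold)
    also have "\<dots> = (\<Sum>x\<in>Wc. real_of_int k0 * (real_of_int (fst x) * ln (cmod (snd x - a))))"
      by (rule sum.cong) (use na in \<open>auto simp: norm_divide ln_div\<close>)
    finally show ?thesis by (simp add: sum_distrib_left)
  qed
  show ?thesis unfolding sb_def[symmetric] e1 e2 e3 e4 K
    by (simp add: sum_negf algebra_simps)
qed

definition cpt :: "int \<times> rpt \<Rightarrow> int \<times> complex" where "cpt x = (fst x, the (snd x))"

lemma sigma_inf_eq:
  assumes c: "continuous_on UNIV \<sigma>" and ti: "theta_invariant \<sigma>"
  shows "sigma_inf \<sigma> = \<sigma> 0"
proof -
  have ic: "isCont \<sigma> 0" using c by (simp add: continuous_on_eq_continuous_at)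
  have t0: "((\<lambda>w. \<sigma> (cnj w)) \<longlongrightarrow> \<sigma> 0) (at 0)"
  proof -
    have "((\<lambda>w. cnj w) \<longlongrightarrow> cnj 0) (at 0)" by (intro tendsto_cnj tendsto_ident_at)
    then have "((\<lambda>w. cnj w) \<longlongrightarrow> 0) (at (0::complex))" by simp
    from isCont_tendsto_compose[OF ic this] show ?thesis .
  qed
  have ev: "\<forall>\<^sub>F w in at 0. \<sigma> (cnj w) = \<sigma> (1 / w) - 4 * ln (cmod w)"
  proof -
    have "\<forall>x::complex. x \<noteq> 0 \<longrightarrow> \<sigma> (cnj x) = \<sigma> (1 / x) - 4 * ln (cmod x)"
      using ti unfolding theta_invariant_def by (auto dest: spec[of _ "cnj _"])
    then show ?thesis unfolding eventually_at_filter by (intro always_eventually) auto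
  qed
  have "((\<lambda>w. \<sigma> (1 / w) - 4 * ln (cmod w)) \<longlongrightarrow> \<sigma> 0) (at 0)"
    using tendsto_cong[OF ev] t0 by simp
  then show ?thesis unfolding sigma_inf_def by (intro tendsto_Lim) simp_all
qed

lemma G0:
  assumes "sum_list (map fst W) \<noteq> 0"
  shows "expect_sym \<sigma> W = 0"
  using assms unfolding expect_sym_def Let_def expect_fin_def by simp

lemma inj_on_the: "None \<notin> A \<Longrightarrow> inj_on the A"
  by (auto simp: inj_on_def) (metis option.exhaust_sel)

lemma G1:
  assumes d: "distinct (map snd W)" and nn: "None \<notin> snd ` set W" and neu: "sum_list (map fst W) = 0"
  shows "expect_sym \<sigma> W = exp (ELs \<sigma> (cpt ` set W))"
proof -
  define L where "L = map cpt W"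
  have nn': "None \<notin> set (map snd W)" using nn by simp
  have e: "expect_sym \<sigma> W = expect_fin \<sigma> (map fst W) (map the (map snd W))"
    unfolding expect_sym_def Let_def using nn' by simp
  have f: "map fst L = map fst W" "map snd L = map the (map snd W)" by (simp_all add: L_def cpt_def)
  have dL: "distinct (map snd L)" unfolding f(2) using d nn' inj_on_the[OF nn'] by (simp add: distinct_map comp_inj_on)
  have "expect_fin \<sigma> (map fst L) (map snd L) = exp (ELs \<sigma> (set L))"
    by (rule EF[OF dL]) (simp add: f neu)
  then show ?thesis unfolding e f(1) f(2)[symmetric] by (simp add: L_def)
qed

lemma G2:
  assumes d: "distinct (map snd W)" and kn: "(k, None) \<in> set W" and neu: "sum_list (map fst W) = 0"
  shows "expect_sym \<sigma> W = exp (ELs \<sigma> (cpt ` {x \<in> set W. snd x \<noteq> None}) - (1 / (8 * pi)) * (real_of_int k)\<^sup>2 * sigma_inf \<sigma>)"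
proof -
  define ps where "ps = map snd W"
  have nin: "None \<in> set ps" using kn unfolding ps_def by force
  have "finite {a. Some a \<in> set ps}"
  proof -
    have "{a. Some a \<in> set ps} = Some -` set ps" by auto
    then show ?thesis using finite_vimageI[of "set ps" Some] by simp
  qed
  then have "\<exists>a. Some a \<notin> set ps"
    using ex_new_if_finite[OF infinite_UNIV_char_0] by auto
  then have ha: "Some (SOME a. Some a \<notin> set ps) \<notin> set ps" by (rule someI_ex)
  define a where "a = (SOME a. Some a \<notin> set ps)"
  have ha': "Some a \<notin> set ps" using ha by (simp add: a_def)
  define chi where "chi = (\<lambda>p. case p of None \<Rightarrow> 0 | Some z \<Rightarrow> 1 / (z - a))"
  define sb where "sb = (\<lambda>w. if w = 0 then sigma_inf \<sigma> else \<sigma> (a + 1 / w) - 4 * ln (cmod w))"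
  have e: "expect_sym \<sigma> W = expect_fin sb (map fst W) (map chi ps)"
    unfolding expect_sym_def Let_def chi_def sb_def a_def ps_def using nin[unfolded ps_def] by simp
  define L where "L = map (\<lambda>x. (fst x, chi (snd x))) W"
  have f: "map fst L = map fst W" "map snd L = map chi ps" by (simp_all add: L_def ps_def)
  have ichi: "inj_on chi (set ps)"
  proof (rule inj_onI)
    fix p q assume p: "p \<in> set ps" and q: "q \<in> set ps" and pq: "chi p = chi q"
    show "p = q"
    proof (cases p; cases q)
      fix z w assume "p = Some z" "q = Some w"
      moreover have "z \<noteq> a" "w \<noteq> a" using ha' p q \<open>p = Some z\<close> \<open>q = Some w\<close> by auto
      ultimately show ?thesis using pq by (simp add: chi_def)
    next
      fix z assume "p = Some z" "q = None"
      moreover have "z \<noteq> a" using ha' p \<open>p = Some z\<close> by auto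
      ultimately show ?thesis using pq by (simp add: chi_def)
    next
      fix w assume "p = None" "q = Some w"
      moreover have "w \<noteq> a" using ha' q \<open>q = Some w\<close> by auto
      ultimately show ?thesis using pq by (simp add: chi_def)
    qed simp
  qed
  have dL: "distinct (map snd L)" unfolding f(2) using d ichi by (simp add: distinct_map ps_def comp_inj_on)
  have ef: "expect_fin sb (map fst L) (map snd L) = exp (ELs sb (set L))"
    by (rule EF[OF dL]) (simp add: f neu)
  define NN where "NN = {x \<in> set W. snd x \<noteq> None}"
  define Wc where "Wc = cpt ` NN"
  have injsW: "inj_on snd (set W)" using d by (simp add: distinct_map)
  have noneset: "{x \<in> set W. snd x = None} = {(k, None)}"
  proof (rule subset_antisym)
    show "{x \<in> set W. snd x = None} \<subseteq> {(k, None)}"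
    proof (rule subsetI)
      fix x assume x: "x \<in> {x \<in> set W. snd x = None}"
      then have "snd x = snd (k, None)" by simp
      then have "x = (k, None)" using inj_onD[OF injsW _ _ kn] x by simp
      then show "x \<in> {(k, None)}" by simp
    qed
    show "{(k, None)} \<subseteq> {x \<in> set W. snd x = None}" using kn by simp
  qed
  have sW: "set W = NN \<union> {(k, None)}"
  proof -
    have "set W = {x \<in> set W. snd x \<noteq> None} \<union> {x \<in> set W. snd x = None}" by auto
    then show ?thesis unfolding noneset NN_def .
  qed
  have injc: "inj_on cpt NN"
  proof (rule inj_onI)
    fix x y assume "x \<in> NN" "y \<in> NN" "cpt x = cpt y"
    then show "x = y" unfolding NN_def cpt_def by (auto simp: prod_eq_iff)
  qed
  have sL: "set L = (\<lambda>(k, z). (k, 1 / (z - a))) ` Wc \<union> {(- (- k), 0)}"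
  proof -
    have "set L = (\<lambda>x. (fst x, chi (snd x))) ` NN \<union> {(k, 0)}" unfolding L_def set_map sW by (simp add: chi_def)
    moreover have "(\<lambda>x. (fst x, chi (snd x))) ` NN = (\<lambda>(k, z). (k, 1 / (z - a))) ` Wc"
      unfolding Wc_def image_image
      by (rule image_cong) (auto simp: NN_def cpt_def chi_def)
    ultimately show ?thesis by simp
  qed
  have fNN: "finite NN" by (simp add: NN_def)
  have KW: "Kc Wc = - k"
  proof -
    have "sum_list (map fst W) = sum fst (set W)" using d by (simp add: distinct_map sum.distinct_set_conv_list)
    also have "\<dots> = sum fst NN + k" unfolding sW by (subst sum.union_disjoint) (auto simp: NN_def fNN)
    also have "sum fst NN = Kc Wc" unfolding Kc_def Wc_def by (subst sum.reindex[OF injc]) (simp add: cpt_def)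
    finally show ?thesis using neu by simp
  qed
  have ch: "ELs sb ((\<lambda>(k, z). (k, 1 / (z - a))) ` Wc \<union> {(- (- k), 0)}) = ELs \<sigma> Wc - (1 / (8 * pi)) * (real_of_int (- k))\<^sup>2 * sigma_inf \<sigma>"
    unfolding sb_def
  proof (rule chart)
    show "finite Wc" by (simp add: Wc_def fNN)
    show "inj_on snd Wc"
    proof (rule inj_onI)
      fix x y assume "x \<in> Wc" "y \<in> Wc" "snd x = snd y"
      then obtain u v where u: "u \<in> NN" "x = cpt u" and v: "v \<in> NN" "y = cpt v" by (auto simp: Wc_def)
      then have "snd u = snd v" using \<open>snd x = snd y\<close> unfolding NN_def cpt_def by auto
      then have "u = v" using injsW u v unfolding NN_def by (auto simp: inj_on_def)
      then show "x = y" using u v by simp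
    qed
    show "snd x \<noteq> a" if xW: "x \<in> Wc" for x
    proof
      assume "snd x = a"
      obtain u where "u \<in> NN" "x = cpt u" using xW unfolding Wc_def by blast
      then have "snd u = Some a" using \<open>snd x = a\<close> unfolding NN_def cpt_def by auto
      then show False using ha' \<open>u \<in> NN\<close> unfolding NN_def ps_def by force
    qed
  qed (rule KW)
  have "expect_sym \<sigma> W = exp (ELs sb (set L))" using e ef f by simp
  also have "ELs sb (set L) = ELs \<sigma> Wc - (1 / (8 * pi)) * (real_of_int (- k))\<^sup>2 * sigma_inf \<sigma>"
    unfolding sL by (rule ch)
  finally show ?thesis by (simp add: Wc_def NN_def)
qed

lemma B0_iff: "p \<in> B0 \<longleftrightarrow> (\<exists>z. p = Some z \<and> cmod z < 1)"
  by (auto simp: B0_def)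

lemma theta_theta: "theta (theta p) = p"
  by (cases p) (auto simp: theta_def)

lemma theta_Some: "z \<noteq> 0 \<Longrightarrow> theta (Some z) = Some (1 / cnj z)"
  by (simp add: theta_def)

lemma theta_notB0: "p \<in> B0 \<Longrightarrow> theta p \<notin> B0"
proof -
  assume "p \<in> B0"
  then obtain z where z: "p = Some z" "cmod z < 1" by (auto simp: B0_iff)
  show ?thesis
  proof (cases "z = 0")
    case True then show ?thesis using z by (simp add: theta_def B0_iff)
  next
    case False
    then have "cmod (1 / cnj z) > 1" using z by (simp add: norm_divide)
    then show ?thesis using z False by (auto simp: theta_def B0_iff)
  qed
qed

lemma symfacts:
  assumes d: "distinct (map snd Y)" and b: "set (map snd Y) \<subseteq> B0"
  shows "inj_on cpt (set Y)" "sum_list (map fst Y) = Kc (cpt ` set Y)"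
    "inj_on snd (cpt ` set Y)" "finite (cpt ` set Y)" "\<And>x. x \<in> cpt ` set Y \<Longrightarrow> cmod (snd x) < 1"
    "\<And>x. x \<in> set Y \<Longrightarrow> \<exists>z. snd x = Some z \<and> cmod z < 1"
proof -
  show sm: "\<And>x. x \<in> set Y \<Longrightarrow> \<exists>z. snd x = Some z \<and> cmod z < 1" using b by (auto simp: B0_iff)
  have isn: "inj_on snd (set Y)" using d by (simp add: distinct_map)
  show ic: "inj_on cpt (set Y)"
  proof (rule inj_onI)
    fix x y assume x: "x \<in> set Y" and y: "y \<in> set Y" and e: "cpt x = cpt y"
    then have "snd x = snd y" using sm[OF x] sm[OF y] by (auto simp: cpt_def)
    moreover have "fst x = fst y" using e by (simp add: cpt_def)
    ultimately show "x = y" by (simp add: prod_eq_iff)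
  qed
  have "sum_list (map fst Y) = sum fst (set Y)" using d by (simp add: distinct_map sum.distinct_set_conv_list)
  also have "\<dots> = Kc (cpt ` set Y)" unfolding Kc_def by (subst sum.reindex[OF ic]) (simp add: cpt_def)
  finally show "sum_list (map fst Y) = Kc (cpt ` set Y)" .
  show "inj_on snd (cpt ` set Y)"
  proof (rule inj_onI)
    fix x y assume "x \<in> cpt ` set Y" "y \<in> cpt ` set Y" "snd x = snd y"
    then obtain u v where u: "u \<in> set Y" "x = cpt u" and v: "v \<in> set Y" "y = cpt v" by blast
    have "snd u = snd v" using sm[OF u(1)] sm[OF v(1)] \<open>snd x = snd y\<close> u v by (auto simp: cpt_def)
    then have "u = v" using inj_onD[OF isn _ u(1) v(1)] by simp
    then show "x = y" using u v by simp
  qed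
  show "finite (cpt ` set Y)" by simp
  show "cmod (snd x) < 1" if xin: "x \<in> cpt ` set Y" for x
  proof -
    obtain y where y: "y \<in> set Y" "x = cpt y" using xin by blast
    obtain z where "snd y = Some z" "cmod z < 1" using sm[OF y(1)] by blast
    then show ?thesis using y by (simp add: cpt_def)
  qed
qed

lemma W_facts:
  assumes dY: "distinct (map snd Y)" and bY: "set (map snd Y) \<subseteq> B0"
    and dC: "distinct (map snd C)" and bC: "set (map snd C) \<subseteq> B0"
  shows "distinct (map snd (Theta_sym Y @ C))"
    "sum_list (map fst (Theta_sym Y @ C)) = Kc (cpt ` set C) - Kc (cpt ` set Y)"
    "cpt ` {x \<in> set (Theta_sym Y @ C). snd x \<noteq> None}
       = (\<lambda>(k, z). (- k, 1 / cnj z)) ` {x \<in> cpt ` set Y. snd x \<noteq> 0} \<union> cpt ` set C"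
proof -
  have ms: "map snd (Theta_sym Y) = map theta (map snd Y)" by (simp add: Theta_sym_def case_prod_unfold)
  have mf: "map fst (Theta_sym Y) = map uminus (map fst Y)" by (simp add: Theta_sym_def case_prod_unfold)
  have it: "inj_on theta (set (map snd Y))" by (metis inj_on_inverseI theta_theta)
  have disj: "theta ` set (map snd Y) \<inter> set (map snd C) = {}" using bY bC theta_notB0 by blast
  show "distinct (map snd (Theta_sym Y @ C))"
    using dY dC it disj by (simp add: ms distinct_map comp_inj_on image_image)
  have "sum_list (map uminus (map fst Y)) = - sum_list (map fst Y)" by (induction Y) simp_all
  then show "sum_list (map fst (Theta_sym Y @ C)) = Kc (cpt ` set C) - Kc (cpt ` set Y)"
    using symfacts(2)[OF dY bY] symfacts(2)[OF dC bC] by (simp add: mf)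
  have sY: "\<And>x. x \<in> set Y \<Longrightarrow> \<exists>z. snd x = Some z \<and> cmod z < 1" by (rule symfacts(6)[OF dY bY])
  have sC: "\<And>x. x \<in> set C \<Longrightarrow> \<exists>z. snd x = Some z \<and> cmod z < 1" by (rule symfacts(6)[OF dC bC])
  have st: "set (Theta_sym Y) = (\<lambda>(k, z). (- k, theta z)) ` set Y" by (simp add: Theta_sym_def)
  have "{x \<in> set (Theta_sym Y @ C). snd x \<noteq> None} = (\<lambda>(k, z). (- k, theta z)) ` {y \<in> set Y. snd y \<noteq> Some 0} \<union> set C"
  proof (rule set_eqI)
    fix x
    show "x \<in> {x \<in> set (Theta_sym Y @ C). snd x \<noteq> None} \<longleftrightarrow> x \<in> (\<lambda>(k, z). (- k, theta z)) ` {y \<in> set Y. snd y \<noteq> Some 0} \<union> set C"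
    proof
      assume "x \<in> {x \<in> set (Theta_sym Y @ C). snd x \<noteq> None}"
      then have x: "x \<in> set (Theta_sym Y) \<or> x \<in> set C" "snd x \<noteq> None" by auto
      show "x \<in> (\<lambda>(k, z). (- k, theta z)) ` {y \<in> set Y. snd y \<noteq> Some 0} \<union> set C"
      proof (cases "x \<in> set C")
        case False
        then have "x \<in> (\<lambda>(k, z). (- k, theta z)) ` set Y" using x(1) st by simp
        then obtain y where y: "y \<in> set Y" "x = (\<lambda>(k, z). (- k, theta z)) y" by blast
        have "snd y \<noteq> Some 0"
        proof
          assume "snd y = Some 0"
          then have "snd x = None" using y(2) by (simp add: theta_def case_prod_unfold)
          then show False using x(2) by simp
        qed
        then have "y \<in> {y \<in> set Y. snd y \<noteq> Some 0}" using y(1) by simp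
        then show ?thesis using y(2) by blast
      qed simp
    next
      assume "x \<in> (\<lambda>(k, z). (- k, theta z)) ` {y \<in> set Y. snd y \<noteq> Some 0} \<union> set C"
      then show "x \<in> {x \<in> set (Theta_sym Y @ C). snd x \<noteq> None}"
      proof
        assume xC: "x \<in> set C"
        obtain z where "snd x = Some z" using sC[OF xC] by blast
        then show ?thesis using xC by simp
      next
        assume "x \<in> (\<lambda>(k, z). (- k, theta z)) ` {y \<in> set Y. snd y \<noteq> Some 0}"
        then obtain y where y: "y \<in> set Y" "snd y \<noteq> Some 0" "x = (\<lambda>(k, z). (- k, theta z)) y" by blast
        obtain z where z: "snd y = Some z" using sY[OF y(1)] by blast
        have "z \<noteq> 0" using y z by simp
        then have "snd x \<noteq> None" using y z by (simp add: theta_def case_prod_unfold)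
        moreover have "x \<in> set (Theta_sym Y)" using st y by simp
        ultimately show ?thesis by simp
      qed
    qed
  qed
  moreover have "cpt ` (\<lambda>(k, z). (- k, theta z)) ` {y \<in> set Y. snd y \<noteq> Some 0}
      = (\<lambda>(k, z). (- k, 1 / cnj z)) ` {x \<in> cpt ` set Y. snd x \<noteq> 0}"
  proof -
    have "{x \<in> cpt ` set Y. snd x \<noteq> 0} = cpt ` {y \<in> set Y. snd y \<noteq> Some 0}"
    proof (rule set_eqI, rule iffI)
      fix x assume "x \<in> {x \<in> cpt ` set Y. snd x \<noteq> 0}"
      then obtain y where y: "y \<in> set Y" "x = cpt y" "snd x \<noteq> 0" by blast
      obtain z where "snd y = Some z" using sY[OF y(1)] by blast
      then show "x \<in> cpt ` {y \<in> set Y. snd y \<noteq> Some 0}" using y by (auto simp: cpt_def)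
    next
      fix x assume "x \<in> cpt ` {y \<in> set Y. snd y \<noteq> Some 0}"
      then obtain y where y: "y \<in> set Y" "x = cpt y" "snd y \<noteq> Some 0" by blast
      obtain z where "snd y = Some z" using sY[OF y(1)] by blast
      then show "x \<in> {x \<in> cpt ` set Y. snd x \<noteq> 0}" using y by (auto simp: cpt_def)
    qed
    moreover have "cpt ` (\<lambda>(k, z). (- k, theta z)) ` {y \<in> set Y. snd y \<noteq> Some 0}
      = (\<lambda>(k, z). (- k, 1 / cnj z)) ` cpt ` {y \<in> set Y. snd y \<noteq> Some 0}"
      unfolding image_image
    proof (rule image_cong[OF refl])
      fix y assume y: "y \<in> {y \<in> set Y. snd y \<noteq> Some 0}"
      obtain z where z: "snd y = Some z" using sY y by blast
      then have "z \<noteq> 0" using y by simp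
      then show "cpt (case y of (k, z) \<Rightarrow> (- k, theta z)) = (case cpt y of (k, z) \<Rightarrow> (- k, 1 / cnj z))"
        using z by (simp add: case_prod_unfold cpt_def theta_def)
    qed
    ultimately show ?thesis by simp
  qed
  ultimately show "cpt ` {x \<in> set (Theta_sym Y @ C). snd x \<noteq> None}
       = (\<lambda>(k, z). (- k, 1 / cnj z)) ` {x \<in> cpt ` set Y. snd x \<noteq> 0} \<union> cpt ` set C"
    by (simp add: image_Un)
qed


lemma Xk_union1: "finite A \<Longrightarrow> finite B \<Longrightarrow> A \<inter> B = {} \<Longrightarrow> Xk (A \<union> B) C = Xk A C + Xk B C"
  unfolding Xk_def by (simp add: sum.union_disjoint algebra_simps)

lemma sym_core:
  assumes ti: "theta_invariant \<sigma>" and cont: "continuous_on UNIV \<sigma>"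
    and dY: "distinct (map snd Y)" and bY: "set (map snd Y) \<subseteq> B0"
    and dC: "distinct (map snd C)" and bC: "set (map snd C) \<subseteq> B0"
  shows "expect_sym \<sigma> (Theta_sym Y @ C) = (if Kc (cpt ` set Y) = Kc (cpt ` set C)
     then exp (ELs \<sigma> (cpt ` set Y) + ELs \<sigma> (cpt ` set C) + Xk (cpt ` set Y) (cpt ` set C)) else 0)"
proof (cases "Kc (cpt ` set Y) = Kc (cpt ` set C)")
  case False
  then show ?thesis using G0 W_facts(2)[OF dY bY dC bC] by simp
next
  case True
  define W where "W = Theta_sym Y @ C"
  define Yc where "Yc = cpt ` set Y"
  define Cc where "Cc = cpt ` set C"
  define Y1 where "Y1 = {x \<in> Yc. snd x \<noteq> 0}"
  define Sl where "Sl = (\<Sum>x\<in>Y1. real_of_int (fst x) * ln (cmod (snd x)))"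
  have neu: "sum_list (map fst W) = 0" using W_facts(2)[OF dY bY dC bC] True by (simp add: W_def)
  have dW: "distinct (map snd W)" using W_facts(1)[OF dY bY dC bC] by (simp add: W_def)
  have NN: "cpt ` {x \<in> set W. snd x \<noteq> None} = (\<lambda>(k, z). (- k, 1 / cnj z)) ` Y1 \<union> Cc"
    using W_facts(3)[OF dY bY dC bC] by (simp add: W_def Y1_def Yc_def Cc_def)
  have fY1: "finite Y1" by (simp add: Y1_def Yc_def)
  have iY1: "inj_on snd Y1" using symfacts(3)[OF dY bY] unfolding Y1_def Yc_def by (rule inj_on_subset) auto
  have bY1: "snd x \<noteq> 0 \<and> cmod (snd x) < 1" if "x \<in> Y1" for x
    using that symfacts(5)[OF dY bY] unfolding Y1_def Yc_def by auto
  have bCc: "cmod (snd x) < 1" if "x \<in> Cc" for x using that symfacts(5)[OF dC bC] unfolding Cc_def by auto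
  have cr: "ELs \<sigma> ((\<lambda>(k, z). (- k, 1 / cnj z)) ` Y1 \<union> Cc) = ELs \<sigma> Y1 + ELs \<sigma> Cc + Xk Y1 Cc
     + (1 / (2 * pi)) * real_of_int (Kc Cc - Kc Y1) * Sl"
    unfolding Sl_def by (rule cross[OF ti fY1 iY1 bY1]) (auto simp: Cc_def bCc)
  have sY: "\<And>x. x \<in> set Y \<Longrightarrow> \<exists>z. snd x = Some z \<and> cmod z < 1" by (rule symfacts(6)[OF dY bY])
  show ?thesis
  proof (cases "\<exists>y\<in>set Y. snd y = Some 0")
    case False
    have Y1e: "Y1 = Yc"
    proof -
      { fix x assume "x \<in> Yc" "snd x = 0"
        then obtain y where y: "y \<in> set Y" "x = cpt y" unfolding Yc_def by blast
        obtain z where "snd y = Some z" using sY[OF y(1)] by blast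
        then have "snd y = Some 0" using y \<open>snd x = 0\<close> by (simp add: cpt_def)
        then have False using False y by blast }
      then show ?thesis unfolding Y1_def by blast
    qed
    have nn: "None \<notin> snd ` set W"
    proof
      assume "None \<in> snd ` set W"
      then obtain x where x: "x \<in> set W" "snd x = None" by force
      have "x \<in> {x \<in> set W. snd x \<noteq> None}"
      proof (cases "x \<in> set C")
        case True
        then show ?thesis using symfacts(6)[OF dC bC, of x] x by auto
      next
        case nC: False
        then have "x \<in> (\<lambda>(k, z). (- k, theta z)) ` set Y" using x(1) by (simp add: W_def Theta_sym_def)
        then obtain y where y: "y \<in> set Y" "x = (\<lambda>(k, z). (- k, theta z)) y" by blast
        obtain z where z: "snd y = Some z" using sY[OF y(1)] by blast
        have "z \<noteq> 0" using False y z by auto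
        then have "snd x \<noteq> None" using y z by (simp add: theta_def case_prod_unfold)
        then show ?thesis using x by simp
      qed
      then show False using x by simp
    qed
    have sW: "{x \<in> set W. snd x \<noteq> None} = set W" using nn by force
    have "expect_sym \<sigma> W = exp (ELs \<sigma> (cpt ` set W))" by (rule G1[OF dW nn neu])
    also have "cpt ` set W = (\<lambda>(k, z). (- k, 1 / cnj z)) ` Y1 \<union> Cc" using NN sW by simp
    finally show ?thesis using cr True by (simp add: W_def Yc_def[symmetric] Cc_def[symmetric] Y1e)
  next
    case True2: True
    then obtain y0 where y0: "y0 \<in> set Y" "snd y0 = Some 0" by blast
    define k0 where "k0 = fst y0"
    have kn: "(- k0, None) \<in> set W"
    proof -
      have "(\<lambda>(k, z). (- k, theta z)) y0 \<in> set W" using y0 by (auto simp: W_def Theta_sym_def)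
      then show ?thesis using y0 by (simp add: case_prod_unfold k0_def theta_def)
    qed
    have "expect_sym \<sigma> W = exp (ELs \<sigma> (cpt ` {x \<in> set W. snd x \<noteq> None}) - (1 / (8 * pi)) * (real_of_int (- k0))\<^sup>2 * sigma_inf \<sigma>)"
      by (rule G2[OF dW kn neu])
    also have "sigma_inf \<sigma> = \<sigma> 0" by (rule sigma_inf_eq[OF cont ti])
    finally have e1: "expect_sym \<sigma> W = exp (ELs \<sigma> Y1 + ELs \<sigma> Cc + Xk Y1 Cc
     + (1 / (2 * pi)) * real_of_int (Kc Cc - Kc Y1) * Sl - (1 / (8 * pi)) * (real_of_int k0)\<^sup>2 * \<sigma> 0)"
      unfolding NN cr by simp
    have Yce: "Yc = Y1 \<union> {(k0, 0)}"
    proof -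
      { fix x assume "x \<in> Yc" "snd x = 0"
        then obtain y where y: "y \<in> set Y" "x = cpt y" unfolding Yc_def by blast
        obtain z where "snd y = Some z" using sY[OF y(1)] by blast
        then have "snd y = Some 0" using y \<open>snd x = 0\<close> by (simp add: cpt_def)
        then have "y = y0" using inj_onD[OF symfacts(1)[OF dY bY]] y0 y
          by (metis dY distinct_map inj_onD)
        then have "x = (k0, 0)" using y y0 by (simp add: cpt_def k0_def) }
      moreover have "(k0, 0) \<in> Yc" using y0 unfolding Yc_def k0_def cpt_def by force
      ultimately show ?thesis unfolding Y1_def by blast
    qed
    have dis: "Y1 \<inter> {(k0, 0)} = {}" by (simp add: Y1_def)
    have KY: "Kc Yc = Kc Y1 + k0" unfolding Yce Kc_def using fY1 dis by (simp add: sum.union_disjoint)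
    have EY: "ELs \<sigma> Yc = ELs \<sigma> Y1 - (1 / (8 * pi)) * (real_of_int k0)\<^sup>2 * \<sigma> 0 + (1 / (2 * pi)) * (real_of_int k0 * Sl)"
    proof -
      have "ELs \<sigma> Yc = ELs \<sigma> Y1 + ELs \<sigma> {(k0, 0)} + (1 / (2 * pi)) * Ds Y1 {(k0, 0)}"
        unfolding Yce by (rule ELs_union[OF fY1 _ dis]) simp
      moreover have "ELs \<sigma> {(k0, 0)} = - (1 / (8 * pi)) * (real_of_int k0)\<^sup>2 * \<sigma> 0"
        by (simp add: ELs_def Vs_def Ds_def)
      moreover have "Ds Y1 {(k0, 0)} = real_of_int k0 * Sl"
        unfolding Ds_def Sl_def by (simp add: sum_distrib_left mult_ac)
      ultimately show ?thesis by simp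
    qed
    have XY: "Xk Yc Cc = Xk Y1 Cc" unfolding Yce by (subst Xk_union1[OF fY1 _ dis]) (simp_all add: Xk_def)
    have KK: "Kc Cc - Kc Y1 = k0" using True KY by (simp add: Yc_def Cc_def)
    show ?thesis using e1 True EY XY KK
      by (simp add: W_def Yc_def[symmetric] Cc_def[symmetric] algebra_simps)
  qed
qed

lemma re_series:
  fixes t :: complex
  assumes "cmod t < 1"
  shows "(\<lambda>N. \<Sum>n<N. Re (t ^ n) / real n) \<longlonglongrightarrow> - ln (cmod (1 - t))"
proof -
  have "(\<lambda>n. - ((- (- t)) ^ n) / of_nat n) sums Ln (1 + - t)" using Ln_series'[of "- t"] assms by simp
  then have "(\<lambda>n. - (t ^ n) / of_nat n) sums Ln (1 - t)" by simp
  then have "(\<lambda>n. - (- (t ^ n) / of_nat n)) sums - Ln (1 - t)" by (rule sums_minus)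
  then have "(\<lambda>n. t ^ n / of_nat n) sums - Ln (1 - t)" by simp
  then have "(\<lambda>n. Re (t ^ n / of_nat n)) sums Re (- Ln (1 - t))" by (simp add: sums_complex_iff)
  moreover have "1 - t \<noteq> 0" using assms by auto
  ultimately have "(\<lambda>n. Re (t ^ n) / real n) sums - ln (cmod (1 - t))" by simp
  then show ?thesis by (simp add: sums_def)
qed

definition acoef :: "nat \<Rightarrow> symbol \<Rightarrow> complex" where
  "acoef n Y = (\<Sum>x\<in>cpt ` set Y. of_int (fst x) * snd x ^ n)"
definition bcoef :: "nat \<Rightarrow> symbol \<Rightarrow> complex" where
  "bcoef n Y = (\<Sum>x\<in>cpt ` set Y. of_int (fst x) * cnj (snd x) ^ n)"
definition BN :: "nat \<Rightarrow> symbol \<Rightarrow> symbol \<Rightarrow> complex" where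
  "BN N Y Z = (\<Sum>n<N. of_real (1 / (4 * pi * real n)) * (cnj (acoef n Y) * acoef n Z + cnj (bcoef n Y) * bcoef n Z))"

lemma Rk_BN: "Rk (BN N)"
proof -
  have "Rk (\<lambda>Y Z. \<Sum>n\<in>{..<N}. of_real (1 / (4 * pi * real n)) * (cnj (acoef n Y) * acoef n Z + cnj (bcoef n Y) * bcoef n Z))"
    by (intro Rk_sum ballI Rk_scale Rk_plus Rk_rank1) auto
  then show ?thesis unfolding BN_def[abs_def] .
qed

lemma aux: "1 / (4 * pi * real n) * (c * (2 * r)) = c / (2 * pi) * (r / real n)"
  by (cases "n = 0") (simp_all add: field_simps)

lemma BN_eq:
  "BN N Y Z = of_real (\<Sum>x\<in>cpt ` set Y. \<Sum>y\<in>cpt ` set Z.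
      real_of_int (fst x * fst y) / (2 * pi) * (\<Sum>n<N. Re ((cnj (snd x) * snd y) ^ n) / real n))"
proof -
  define A where "A = cpt ` set Y"
  define B where "B = cpt ` set Z"
  have t: "cnj (acoef n Y) * acoef n Z + cnj (bcoef n Y) * bcoef n Z
     = of_real (\<Sum>x\<in>A. \<Sum>y\<in>B. real_of_int (fst x * fst y) * (2 * Re ((cnj (snd x) * snd y) ^ n)))" for n
  proof -
    have "cnj (acoef n Y) * acoef n Z = (\<Sum>x\<in>A. \<Sum>y\<in>B. of_int (fst x * fst y) * (cnj (snd x) * snd y) ^ n)"
      unfolding acoef_def A_def[symmetric] B_def[symmetric] cnj_sum sum_product
      by (simp add: power_mult_distrib mult_ac)
    moreover have "cnj (bcoef n Y) * bcoef n Z = (\<Sum>x\<in>A. \<Sum>y\<in>B. of_int (fst x * fst y) * cnj ((cnj (snd x) * snd y) ^ n))"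
      unfolding bcoef_def A_def[symmetric] B_def[symmetric] cnj_sum sum_product
      by (simp add: power_mult_distrib mult_ac)
    ultimately have "cnj (acoef n Y) * acoef n Z + cnj (bcoef n Y) * bcoef n Z
       = (\<Sum>x\<in>A. \<Sum>y\<in>B. of_int (fst x * fst y) * ((cnj (snd x) * snd y) ^ n + cnj ((cnj (snd x) * snd y) ^ n)))"
      by (simp add: sum.distrib distrib_left)
    also have "\<dots> = (\<Sum>x\<in>A. \<Sum>y\<in>B. of_real (real_of_int (fst x * fst y) * (2 * Re ((cnj (snd x) * snd y) ^ n))))"
      by (simp only: complex_add_cnj of_real_mult of_real_of_int_eq)
    finally show ?thesis by simp
  qed
  have "BN N Y Z = of_real (\<Sum>n<N. 1 / (4 * pi * real n) * (\<Sum>x\<in>A. \<Sum>y\<in>B. real_of_int (fst x * fst y) * (2 * Re ((cnj (snd x) * snd y) ^ n))))"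
    unfolding BN_def t by simp
  also have "(\<Sum>n<N. 1 / (4 * pi * real n) * (\<Sum>x\<in>A. \<Sum>y\<in>B. real_of_int (fst x * fst y) * (2 * Re ((cnj (snd x) * snd y) ^ n))))
     = (\<Sum>x\<in>A. \<Sum>y\<in>B. real_of_int (fst x * fst y) / (2 * pi) * (\<Sum>n<N. Re ((cnj (snd x) * snd y) ^ n) / real n))"
  proof -
    have "(\<Sum>n<N. 1 / (4 * pi * real n) * (\<Sum>x\<in>A. \<Sum>y\<in>B. real_of_int (fst x * fst y) * (2 * Re ((cnj (snd x) * snd y) ^ n))))
      = (\<Sum>n<N. \<Sum>x\<in>A. \<Sum>y\<in>B. real_of_int (fst x * fst y) / (2 * pi) * (Re ((cnj (snd x) * snd y) ^ n) / real n))"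
      unfolding sum_distrib_left by (intro sum.cong refl) (rule aux)
    also have "\<dots> = (\<Sum>x\<in>A. \<Sum>n<N. \<Sum>y\<in>B. real_of_int (fst x * fst y) / (2 * pi) * (Re ((cnj (snd x) * snd y) ^ n) / real n))"
      by (rule sum.swap)
    also have "\<dots> = (\<Sum>x\<in>A. \<Sum>y\<in>B. \<Sum>n<N. real_of_int (fst x * fst y) / (2 * pi) * (Re ((cnj (snd x) * snd y) ^ n) / real n))"
      by (intro sum.cong refl sum.swap)
    also have "\<dots> = (\<Sum>x\<in>A. \<Sum>y\<in>B. real_of_int (fst x * fst y) / (2 * pi) * (\<Sum>n<N. Re ((cnj (snd x) * snd y) ^ n) / real n))"
      by (simp add: sum_distrib_left)
    finally show ?thesis .
  qed
  finally show ?thesis by (simp add: A_def B_def)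
qed


lemma BN_lim:
  assumes dY: "distinct (map snd Y)" "set (map snd Y) \<subseteq> B0"
    and dZ: "distinct (map snd Z)" "set (map snd Z) \<subseteq> B0"
  shows "(\<lambda>N. BN N Y Z) \<longlonglongrightarrow> of_real (Xk (cpt ` set Y) (cpt ` set Z))"
proof -
  have lim: "(\<lambda>N. \<Sum>x\<in>cpt ` set Y. \<Sum>y\<in>cpt ` set Z.
      real_of_int (fst x * fst y) / (2 * pi) * (\<Sum>n<N. Re ((cnj (snd x) * snd y) ^ n) / real n))
    \<longlonglongrightarrow> (\<Sum>x\<in>cpt ` set Y. \<Sum>y\<in>cpt ` set Z. real_of_int (fst x * fst y) / (2 * pi) * - ln (cmod (1 - cnj (snd x) * snd y)))"
  proof (intro tendsto_sum tendsto_mult_left re_series)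
    fix x y assume "x \<in> cpt ` set Y" "y \<in> cpt ` set Z"
    then have "cmod (snd x) < 1" "cmod (snd y) < 1" using symfacts(5)[OF dY] symfacts(5)[OF dZ] by auto
    then have "cmod (snd x) * cmod (snd y) < 1 * 1" by (intro mult_strict_mono') auto
    then show "cmod (cnj (snd x) * snd y) < 1" by (simp add: norm_mult)
  qed
  have e: "(\<Sum>x\<in>cpt ` set Y. \<Sum>y\<in>cpt ` set Z. real_of_int (fst x * fst y) / (2 * pi) * - ln (cmod (1 - cnj (snd x) * snd y)))
     = Xk (cpt ` set Y) (cpt ` set Z)"
    unfolding Xk_def by (simp add: sum_distrib_left sum_negf)
  show ?thesis unfolding BN_eq e[symmetric] by (rule tendsto_of_real[OF lim])
qed

lemma kernel_pd:
  assumes fS: "finite S" and hS: "\<And>Y. Y \<in> S \<Longrightarrow> distinct (map snd Y) \<and> set (map snd Y) \<subseteq> B0"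
    and ti: "theta_invariant \<sigma>" and cont: "continuous_on UNIV \<sigma>"
  shows "pd S (\<lambda>Y Z. complex_of_real (expect_sym \<sigma> (Theta_sym Y @ Z)))"
proof -
  define Kq where "Kq Y = Kc (cpt ` set Y)" for Y
  define Q where "Q = Kq ` S"
  define h where "h Y = complex_of_real (exp (ELs \<sigma> (cpt ` set Y)))" for Y
  define Ind where "Ind Y Z = (\<Sum>q\<in>Q. cnj (if Kq Y = q then 1 else 0) * (if Kq Z = q then (1::complex) else 0))" for Y Z
  define U where "U N Y Z = cnj (h Y) * h Z * Ind Y Z * exp (BN N Y Z)" for N Y Z
  define T where "T N M Y Z = cnj (h Y) * h Z * Ind Y Z * (\<Sum>m\<in>{..<M}. of_real (inverse (fact m)) * BN N Y Z ^ m)" for N M Y Z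
  have fQ: "finite Q" using fS by (simp add: Q_def)
  have RInd: "Rk Ind" unfolding Ind_def[abs_def] by (intro Rk_sum ballI Rk_rank1 fQ)
  have RS: "Rk (\<lambda>Y Z. \<Sum>m\<in>{..<M}. of_real (inverse (fact m)) * BN N Y Z ^ m)" for N M
    by (intro Rk_sum ballI Rk_scale Rk_power Rk_BN) auto
  have RT: "Rk (T N M)" for N M
    unfolding T_def[abs_def] by (rule Rk_mult[OF RS Rk_mult[OF RInd Rk_rank1]])
  have pU: "pd S (U N)" for N
  proof (rule pd_limit[OF fS])
    show "pd S (T N M)" for M by (rule Rk_pd[OF RT])
    fix Y Z
    have "(\<lambda>m. BN N Y Z ^ m /\<^sub>R fact m) sums exp (BN N Y Z)" by (rule exp_converges)
    then have "(\<lambda>M. \<Sum>m\<in>{..<M}. of_real (inverse (fact m)) * BN N Y Z ^ m) \<longlonglongrightarrow> exp (BN N Y Z)"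
      by (simp add: sums_def scaleR_conv_of_real)
    then show "(\<lambda>M. T N M Y Z) \<longlonglongrightarrow> U N Y Z" unfolding T_def U_def by (intro tendsto_mult_left)
  qed
  show ?thesis
  proof (rule pd_limit[OF fS pU])
    fix Y Z assume Y: "Y \<in> S" and Z: "Z \<in> S"
    have ind: "Ind Y Z = (if Kq Y = Kq Z then 1 else 0)"
    proof -
      have "Ind Y Z = (\<Sum>q\<in>Q. if Kq Y = q then (if Kq Z = q then 1 else 0) else 0)"
        unfolding Ind_def by (intro sum.cong refl) simp
      also have "\<dots> = (if Kq Y \<in> Q then (if Kq Z = Kq Y then 1 else 0) else 0)"
        by (rule sum.delta'[OF fQ])
      finally show ?thesis using Y by (auto simp: Q_def)
    qed
    have "(\<lambda>N. U N Y Z) \<longlonglongrightarrow> cnj (h Y) * h Z * Ind Y Z * exp (of_real (Xk (cpt ` set Y) (cpt ` set Z)))"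
      unfolding U_def using hS[OF Y] hS[OF Z] by (intro tendsto_mult_left tendsto_exp BN_lim) auto
    moreover have "cnj (h Y) * h Z * Ind Y Z * exp (of_real (Xk (cpt ` set Y) (cpt ` set Z)))
        = complex_of_real (expect_sym \<sigma> (Theta_sym Y @ Z))"
      unfolding sym_core[OF ti cont conjunct1[OF hS[OF Y]] conjunct2[OF hS[OF Y]] conjunct1[OF hS[OF Z]] conjunct2[OF hS[OF Z]]]
      by (simp add: ind Kq_def h_def exp_add exp_of_real)
    ultimately show "(\<lambda>N. U N Y Z) \<longlonglongrightarrow> complex_of_real (expect_sym \<sigma> (Theta_sym Y @ Z))" by simp
  qed
qed

lemma Theta_sym_inv: "Theta_sym (Theta_sym Y) = Y"
  by (induction Y) (auto simp: Theta_sym_def theta_theta)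

lemma finite_splits: "finite {(Z, Z'). Z @ Z' = (W :: 'a list)}"
proof (rule finite_subset)
  show "{(Z, Z'). Z @ Z' = W} \<subseteq> (\<lambda>n. (take n W, drop n W)) ` {..length W}"
  proof
    fix p assume "p \<in> {(Z, Z'). Z @ Z' = W}"
    then obtain Z Z' where p: "p = (Z, Z')" "Z @ Z' = W" by blast
    then have "p = (take (length Z) W, drop (length Z) W)" by auto
    moreover have "length Z \<le> length W" using p by auto
    ultimately show "p \<in> (\<lambda>n. (take n W, drop n W)) ` {..length W}" by blast
  qed
qed simp

lemma expect_rewrite:
  fixes F :: upsilon and e :: "symbol \<Rightarrow> real"
  assumes fS: "finite {Z. F Z \<noteq> 0}"
  shows "(\<Sum>W\<in>{W. ups_mult (Theta_up F) F W \<noteq> 0}. ups_mult (Theta_up F) F W * complex_of_real (e W))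
    = (\<Sum>Y\<in>{Z. F Z \<noteq> 0}. \<Sum>Z\<in>{Z. F Z \<noteq> 0}. cnj (F Y) * F Z * complex_of_real (e (Theta_sym Y @ Z)))"
proof -
  define S where "S = {Z. F Z \<noteq> 0}"
  define G where "G = ups_mult (Theta_up F) F"
  define m where "m = (\<lambda>(Y :: symbol, Z :: symbol). (Theta_sym Y, Z))"
  define R where "R = m ` (S \<times> S)"
  define app where "app = (\<lambda>(Z :: symbol, Z' :: symbol). Z @ Z')"
  define T where "T = app ` R"
  define f where "f = (\<lambda>p. cnj (F (Theta_sym (fst p))) * F (snd p))"
  have fR: "finite R" using fS by (simp add: R_def S_def)
  have fT: "finite T" using fR by (simp add: T_def)
  have Rc: "R = {p. Theta_sym (fst p) \<in> S \<and> snd p \<in> S}"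
  proof (rule set_eqI, rule iffI)
    fix p assume "p \<in> R" then show "p \<in> {p. Theta_sym (fst p) \<in> S \<and> snd p \<in> S}"
      by (auto simp: R_def m_def Theta_sym_inv)
  next
    fix p assume p: "p \<in> {p. Theta_sym (fst p) \<in> S \<and> snd p \<in> S}"
    then have "p = m (Theta_sym (fst p), snd p)" by (simp add: m_def Theta_sym_inv)
    moreover have "(Theta_sym (fst p), snd p) \<in> S \<times> S" using p by simp
    ultimately show "p \<in> R" unfolding R_def by blast
  qed
  have Gs: "G W = (\<Sum>p\<in>{p \<in> R. app p = W}. f p)" for W
  proof -
    have "G W = (\<Sum>p\<in>{(Z, Z'). Z @ Z' = W}. f p)"
      unfolding G_def ups_mult_def Theta_up_def f_def by (simp add: case_prod_unfold)
    also have "\<dots> = (\<Sum>p\<in>{(Z, Z'). Z @ Z' = W} \<inter> R. f p)"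
    proof (rule sum.mono_neutral_right[OF finite_splits])
      show "\<forall>p\<in>{(Z, Z'). Z @ Z' = W} - {(Z, Z'). Z @ Z' = W} \<inter> R. f p = 0"
        unfolding Rc f_def S_def by auto
    qed auto
    also have "{(Z, Z'). Z @ Z' = W} \<inter> R = {p \<in> R. app p = W}" by (auto simp: app_def)
    finally show ?thesis .
  qed
  have supp: "{W. G W \<noteq> 0} \<subseteq> T"
  proof
    fix W assume "W \<in> {W. G W \<noteq> 0}"
    then have "sum f {p \<in> R. app p = W} \<noteq> 0" unfolding Gs by simp
    then have "{p \<in> R. app p = W} \<noteq> {}" by (metis sum.empty)
    then show "W \<in> T" unfolding T_def by blast
  qed
  have "(\<Sum>W\<in>{W. G W \<noteq> 0}. G W * complex_of_real (e W)) = (\<Sum>W\<in>T. G W * complex_of_real (e W))"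
    by (rule sum.mono_neutral_left[OF fT supp]) auto
  also have "\<dots> = (\<Sum>W\<in>T. \<Sum>p\<in>{p \<in> R. app p = W}. f p * complex_of_real (e (app p)))"
    unfolding Gs sum_distrib_right by (intro sum.cong refl) auto
  also have "\<dots> = (\<Sum>p\<in>R. f p * complex_of_real (e (app p)))"
    by (rule sum.group[OF fR fT]) (simp add: T_def)
  also have "\<dots> = (\<Sum>q\<in>S \<times> S. f (m q) * complex_of_real (e (app (m q))))"
  proof -
    have injm: "inj_on m (S \<times> S)"
      by (rule inj_onI) (auto simp: m_def case_prod_unfold prod_eq_iff dest: arg_cong[of _ _ Theta_sym] simp: Theta_sym_inv)
    show ?thesis unfolding R_def by (simp add: sum.reindex[OF injm] comp_def)
  qed
  also have "\<dots> = (\<Sum>(Y, Z)\<in>S \<times> S. cnj (F Y) * F Z * complex_of_real (e (Theta_sym Y @ Z)))"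
    by (intro sum.cong refl) (auto simp: f_def m_def app_def Theta_sym_inv)
  also have "\<dots> = (\<Sum>Y\<in>S. \<Sum>Z\<in>S. cnj (F Y) * F Z * complex_of_real (e (Theta_sym Y @ Z)))"
    by (rule sum.cartesian_product[symmetric])
  finally show ?thesis by (simp add: G_def S_def)
qed

theorem mainTheorem14:
  fixes \<sigma> :: "complex \<Rightarrow> real" and F :: upsilon
  assumes "conformal_metric \<sigma>"
    and "theta_invariant \<sigma>"
    and "in_Upsilon0 F" and "in_UpsilonA B0 F"
  shows "Im (expect \<sigma> (ups_mult (Theta_up F) F)) = 0
         \<and> 0 \<le> Re (expect \<sigma> (ups_mult (Theta_up F) F))"
proof -
  define S where "S = {Z. F Z \<noteq> 0}"
  have fS: "finite S" using assms(3) by (simp add: in_Upsilon0_def in_Upsilon_def S_def)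
  have hS: "distinct (map snd Y) \<and> set (map snd Y) \<subseteq> B0" if "Y \<in> S" for Y
    using assms(3,4) that by (auto simp: in_Upsilon0_def in_UpsilonA_def S_def)
  have cont: "continuous_on UNIV \<sigma>"
  proof -
    have "smooth_on UNIV \<sigma>" using assms(1) by (simp add: conformal_metric_def)
    then have "Ck_on 0 UNIV \<sigma>" by (simp add: smooth_on_def)
    then show ?thesis by simp
  qed
  have P: "pd S (\<lambda>Y Z. complex_of_real (expect_sym \<sigma> (Theta_sym Y @ Z)))"
    by (rule kernel_pd[OF fS hS assms(2) cont])
  have "expect \<sigma> (ups_mult (Theta_up F) F) = (\<Sum>Y\<in>S. \<Sum>Z\<in>S. cnj (F Y) * F Z * complex_of_real (expect_sym \<sigma> (Theta_sym Y @ Z)))"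
    unfolding expect_def S_def by (rule expect_rewrite) (use fS in \<open>simp add: S_def\<close>)
  moreover have "nn (\<Sum>Y\<in>S. \<Sum>Z\<in>S. cnj (F Y) * F Z * complex_of_real (expect_sym \<sigma> (Theta_sym Y @ Z)))"
    using P unfolding pd_def by blast
  ultimately show ?thesis by (simp add: nn_def)
qed

end
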